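(* Let $q\ge1$, $N\ge2$, and let $c_j\in\mathbb R$, $S_j,T_j\in\mathbb R^q$ ($1\le j\le N$) satisfy $$c_i-c_j+S_i\cdot(T_j-T_i)<0\qquad\forall\,1\le i\neq j\le N.$$ Then there exists a smooth convex function $g\colon\mathbb R^q\to\mathbb R$ such that: (i) for some $0<\epsilon<\min_{i\neq j}|T_i-T_j|$, $g(t)=c_j+S_j\cdot(t-T_j)$ for all $t\in\mathbb B_\epsilon(T_j)$ and all $1\le j\le N$; (ii) there is $M>1$ such that for each $k=1,2,\dots$ there is $L_k>0$ with $|D^kg(t)|\le L_k|t|^{1-k}$ for all $|t|\ge M$, where $D^kg$ is any $k$-th order partial derivative of $g$.
   Context: $\mathbb B_\epsilon(T)$ denotes the open ball in $\mathbb R^q$ of radius $\epsilon$ centered at $T$. *)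

theory Defs
  imports "HOL-Analysis.Analysis"
begin

definition partial_deriv :: "'q::finite \<Rightarrow> (real^'q \<Rightarrow> real) \<Rightarrow> real^'q \<Rightarrow> real" where
  "partial_deriv i f t = frechet_derivative f (at t) (axis i 1)"

text \<open>Iterated partial derivative D_{i1} D_{i2} ... D_{ik} f for the index list [i1,...,ik];
  a list of length k gives an arbitrary k-th order partial derivative.\<close>
fun hpartial :: "'q::finite list \<Rightarrow> (real^'q \<Rightarrow> real) \<Rightarrow> real^'q \<Rightarrow> real" where
  "hpartial [] f = f"
| "hpartial (i # is) f = partial_deriv i (hpartial is f)"

text \<open>Smooth (C-infinity) on all of real^'q: every iterated partial derivative exists and
  is (Frechet) differentiable everywhere; hence all partials of all orders are continuous.\<close>
definition smooth :: "(real^'q::finite \<Rightarrow> real) \<Rightarrow> bool" where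
  "smooth f \<longleftrightarrow> (\<forall>is. hpartial is f differentiable_on UNIV)"

end

theory Submission
  imports Defs "HOL-Computational_Algebra.Polynomial"
begin

coinductive Cinf :: "('a::real_normed_vector \<Rightarrow> real) \<Rightarrow> bool" where
  "(\<And>x. f differentiable (at x)) \<Longrightarrow> (\<And>v. Cinf (\<lambda>x. frechet_derivative f (at x) v)) \<Longrightarrow> Cinf f"

lemma Cinf_const: "Cinf (\<lambda>x::'a::real_normed_vector. c)"
proof (rule Cinf.coinduct[where X="\<lambda>f. \<exists>c. f = (\<lambda>x::'a. c)"])
  show "\<exists>c'. (\<lambda>x::'a. c) = (\<lambda>x. c')" by blast
next
  fix f :: "'a \<Rightarrow> real" assume "\<exists>c. f = (\<lambda>x. c)"
  then obtain c where f: "f = (\<lambda>x. c)" by blast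
  have fd: "frechet_derivative f (at x) = (\<lambda>h. 0)" for x
    unfolding f using frechet_derivative_at[OF has_derivative_const] by metis
  show "\<exists>f'. f = f' \<and> (\<forall>x. f' differentiable at x) \<and>
          (\<forall>v. (\<exists>c. (\<lambda>x. frechet_derivative f' (at x) v) = (\<lambda>x. c)) \<or> Cinf (\<lambda>x. frechet_derivative f' (at x) v))"
    using fd by (auto simp: f differentiable_def intro: has_derivative_const)
qed

lemma Cinf_linear:
  assumes "bounded_linear (f::'a::real_normed_vector \<Rightarrow> real)"
  shows "Cinf f"
proof (rule Cinf.intros)
  show "f differentiable (at x)" for x using assms bounded_linear_imp_differentiable by blast
  fix v
  have "frechet_derivative f (at x) = f" for x
    using frechet_derivative_at[OF bounded_linear_imp_has_derivative[OF assms]] by simp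
  then show "Cinf (\<lambda>x. frechet_derivative f (at x) v)" by (simp add: Cinf_const)
qed

lemma Cinf_diff: "Cinf f \<Longrightarrow> f differentiable (at x)"
  by (erule Cinf.cases) auto

lemma Cinf_deriv: "Cinf f \<Longrightarrow> Cinf (\<lambda>x. frechet_derivative f (at x) v)"
  by (erule Cinf.cases) auto

inductive Alg :: "('a::real_normed_vector \<Rightarrow> real) \<Rightarrow> bool" where
  base: "Cinf f \<Longrightarrow> Alg f"
| add: "Alg u \<Longrightarrow> Alg w \<Longrightarrow> Alg (\<lambda>x. u x + w x)"
| mult: "Alg u \<Longrightarrow> Alg w \<Longrightarrow> Alg (\<lambda>x. u x * w x)"
| comp: "Cinf (\<phi>::real\<Rightarrow>real) \<Longrightarrow> Alg u \<Longrightarrow> Alg (\<lambda>x. \<phi> (u x))"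
| pow: "Alg u \<Longrightarrow> (\<And>x. u x > 0) \<Longrightarrow> Alg (\<lambda>x. u x powr r)"

lemma real_linear_eq:
  assumes "linear (L::real \<Rightarrow> real)" shows "L h = h * L 1"
  using linear_scale[OF assms, of h 1] by simp

lemma Alg_deriv:
  assumes "Alg u"
  shows "\<exists>D. (\<forall>x. (u has_derivative D x) (at x)) \<and> (\<forall>v. Alg (\<lambda>x. D x v))"
  using assms
proof induction
  case (base f)
  show ?case
  proof (intro exI[of _ "\<lambda>x. frechet_derivative f (at x)"] conjI allI)
    fix x show "(f has_derivative frechet_derivative f (at x)) (at x)"
      using Cinf_diff[OF base] frechet_derivative_works by blast
  next
    fix v show "Alg (\<lambda>x. frechet_derivative f (at x) v)"
      by (rule Alg.base, rule Cinf_deriv, rule base)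
  qed
next
  case (add u w)
  then obtain D1 D2 where d1: "\<forall>x. (u has_derivative D1 x) (at x)" "\<forall>v. Alg (\<lambda>x. D1 x v)"
    and d2: "\<forall>x. (w has_derivative D2 x) (at x)" "\<forall>v. Alg (\<lambda>x. D2 x v)" by blast
  show ?case
  proof (intro exI[of _ "\<lambda>x h. D1 x h + D2 x h"] conjI allI)
    fix x show "((\<lambda>x. u x + w x) has_derivative (\<lambda>h. D1 x h + D2 x h)) (at x)"
      by (rule has_derivative_add) (use d1 d2 in blast)+
  next
    fix v show "Alg (\<lambda>x. D1 x v + D2 x v)"
      by (rule Alg.add) (use d1 d2 in blast)+
  qed
next
  case (mult u w)
  then obtain D1 D2 where d1: "\<forall>x. (u has_derivative D1 x) (at x)" "\<forall>v. Alg (\<lambda>x. D1 x v)"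
    and d2: "\<forall>x. (w has_derivative D2 x) (at x)" "\<forall>v. Alg (\<lambda>x. D2 x v)" by blast
  show ?case
  proof (intro exI[of _ "\<lambda>x h. u x * D2 x h + D1 x h * w x"] conjI allI)
    fix x show "((\<lambda>x. u x * w x) has_derivative (\<lambda>h. u x * D2 x h + D1 x h * w x)) (at x)"
      by (rule has_derivative_mult) (use d1 d2 in blast)+
  next
    fix v show "Alg (\<lambda>x. u x * D2 x v + D1 x v * w x)"
      by (intro Alg.add Alg.mult mult.hyps) (use d1 d2 in blast)+
  qed
next
  case (comp \<phi> u)
  then obtain D where d: "\<forall>x. (u has_derivative D x) (at x)" "\<forall>v. Alg (\<lambda>x. D x v)" by blast
  define \<phi>' where "\<phi>' y = frechet_derivative \<phi> (at y) 1" for y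
  have c': "Cinf \<phi>'" using comp.hyps(1) unfolding \<phi>'_def by (rule Cinf_deriv)
  have dphi: "(\<phi> has_derivative (\<lambda>h. \<phi>' y * h)) (at y)" for y
  proof -
    have dy: "\<phi> differentiable (at y)" using comp.hyps(1) by (rule Cinf_diff)
    have fd: "(\<phi> has_derivative frechet_derivative \<phi> (at y)) (at y)"
      using dy frechet_derivative_works by blast
    have lin: "linear (frechet_derivative \<phi> (at y))"
      using fd has_derivative_linear by blast
    have "frechet_derivative \<phi> (at y) h = \<phi>' y * h" for h
      unfolding \<phi>'_def using real_linear_eq[OF lin, of h] by (simp only: mult.commute)
    then have "frechet_derivative \<phi> (at y) = (\<lambda>h. \<phi>' y * h)" by (intro ext)
    then show ?thesis using fd by simp
  qed
  show ?case
  proof (intro exI[of _ "\<lambda>x h. \<phi>' (u x) * D x h"] conjI allI)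
    fix x
    show "((\<lambda>x. \<phi> (u x)) has_derivative (\<lambda>h. \<phi>' (u x) * D x h)) (at x)"
      using has_derivative_compose[OF d(1)[rule_format, of x] dphi[of "u x"]] .
  next
    fix v
    show "Alg (\<lambda>x. \<phi>' (u x) * D x v)"
      using Alg.mult[OF Alg.comp[OF c' comp.hyps(2)] d(2)[rule_format, of v]] .
  qed
next
  case (pow u r)
  then obtain D where d: "\<forall>x. (u has_derivative D x) (at x)" "\<forall>v. Alg (\<lambda>x. D x v)" by blast
  show ?case
  proof (intro exI[of _ "\<lambda>x h. r * u x powr (r - 1) * D x h"] conjI allI)
    fix x
    have "((\<lambda>x. u x powr r) has_derivative
       (\<lambda>h. (u x powr r) * (0 * ln (u x) + D x h * r / u x))) (at x)"
      by (rule has_derivative_powr[OF d(1)[rule_format] has_derivative_const]) (use pow.hyps in auto)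
    moreover have "(u x powr r) * (0 * ln (u x) + D x h * r / u x) = r * u x powr (r - 1) * D x h" for h
      using pow.hyps(2)[of x] by (simp add: powr_diff field_simps)
    ultimately show "((\<lambda>x. u x powr r) has_derivative (\<lambda>h. r * u x powr (r - 1) * D x h)) (at x)"
      by simp
  next
    fix v
    show "Alg (\<lambda>x. r * u x powr (r - 1) * D x v)"
      using Alg.mult[OF Alg.mult[OF Alg.base[OF Cinf_const] Alg.pow[OF pow.hyps(1) pow.hyps(2)]] d(2)[rule_format, of v]] .
  qed
qed

lemma Alg_Cinf:
  assumes "Alg u" shows "Cinf u"
  using assms
proof (coinduction arbitrary: u rule: Cinf.coinduct)
  case (Cinf u)
  from Alg_deriv[OF Cinf] obtain D where d: "\<forall>x. (u has_derivative D x) (at x)" "\<forall>v. Alg (\<lambda>x. D x v)"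
    by blast
  have "frechet_derivative u (at x) = D x" for x using frechet_derivative_at d(1) by metis
  then show ?case using d by (auto simp: differentiable_def)
qed

lemma Cinf_smooth:
  fixes f :: "real^'q \<Rightarrow> real"
  assumes "Cinf f" shows "smooth f"
proof -
  have "Cinf (hpartial is f)" for "is"
    by (induction "is") (use assms in \<open>auto simp: partial_deriv_def[abs_def] intro: Cinf_deriv\<close>)
  then show ?thesis unfolding smooth_def
    by (auto simp: differentiable_on_def dest: Cinf_diff intro: differentiable_at_withinI)
qed

definition Fp :: "real poly \<Rightarrow> real \<Rightarrow> real" where
  "Fp p x = (if x > 0 then poly p (1/x) * exp (-(1/x)) else 0)"

lemma poly_div_exp: "((\<lambda>y. poly p y / exp y) \<longlongrightarrow> (0::real)) at_top"
proof -
  have "((\<lambda>y. \<Sum>i\<le>degree p. coeff p i * (y ^ i / exp y)) \<longlongrightarrow> (\<Sum>i\<le>degree p. coeff p i * 0)) at_top"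
    by (intro tendsto_intros tendsto_power_div_exp_0)
  moreover have "poly p y / exp y = (\<Sum>i\<le>degree p. coeff p i * (y ^ i / exp y))" for y
    by (simp add: poly_altdef sum_divide_distrib)
  ultimately show ?thesis by simp
qed

definition qstep :: "real poly \<Rightarrow> real poly" where
  "qstep p = [:0,0,1:] * (p - pderiv p)"

lemma Fp_deriv: "(Fp p has_real_derivative Fp (qstep p) x) (at x)"
proof (cases "x > 0")
  case True
  have "((\<lambda>x. poly p (1/x) * exp (-(1/x))) has_real_derivative
      (poly (pderiv p) (1/x) * (- (1 / x^2)) * exp (-(1/x)) + poly p (1/x) * (exp (-(1/x)) * (1/x^2)))) (at x)"
    using True
    by (auto intro!: derivative_eq_intros DERIV_chain2[OF poly_DERIV] simp: power2_eq_square)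
  moreover have "poly (pderiv p) (1/x) * (- (1 / x^2)) * exp (-(1/x)) + poly p (1/x) * (exp (-(1/x)) * (1/x^2))
      = Fp (qstep p) x"
    using True by (simp add: Fp_def qstep_def algebra_simps power2_eq_square)
  ultimately show ?thesis
    by (rule_tac has_field_derivative_transform_within_open[where S="{0<..}"]) (use True in \<open>auto simp: Fp_def\<close>)
next
  case False
  show ?thesis
  proof (cases "x < 0")
    case True
    have "((\<lambda>x. 0) has_real_derivative 0) (at x)" by simp
    then show ?thesis
      by (rule_tac has_field_derivative_transform_within_open[where S="{..<0}"]) (use True in \<open>auto simp: Fp_def\<close>)
  next
    case False
    then have x0: "x = 0" using \<open>\<not> x > 0\<close> by simp
    have "((\<lambda>h. (Fp p (0 + h) - Fp p 0) / h) \<longlongrightarrow> 0) (at 0)"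
    proof (rule filterlim_split_at)
      have "\<forall>\<^sub>F h in at_left (0::real). (Fp p (0 + h) - Fp p 0) / h = 0"
      proof -
        have "eventually (\<lambda>x. x \<in> {-1<..<0::real}) (at_left 0)" by (rule eventually_at_left_real) simp
        then show ?thesis by eventually_elim (simp add: Fp_def)
      qed
      then show "((\<lambda>h. (Fp p (0 + h) - Fp p 0) / h) \<longlongrightarrow> 0) (at_left 0)"
        by (rule tendsto_eventually)
    next
      have "((\<lambda>y. poly ([:0,1:] * p) y / exp y) \<longlongrightarrow> 0) at_top" by (rule poly_div_exp)
      moreover have "\<forall>\<^sub>F y in at_top. poly ([:0,1:] * p) y / exp y = (Fp p (0 + inverse y) - Fp p 0) / inverse y"
        using eventually_gt_at_top[of 0]
        by eventually_elim (simp add: Fp_def exp_minus field_simps)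
      ultimately have "((\<lambda>y. (Fp p (0 + inverse y) - Fp p 0) / inverse y) \<longlongrightarrow> 0) at_top"
        using tendsto_cong by fastforce
      then show "((\<lambda>h. (Fp p (0 + h) - Fp p 0) / h) \<longlongrightarrow> 0) (at_right 0)"
        by (simp add: filterlim_at_right_to_top)
    qed
    then have "(Fp p has_real_derivative 0) (at 0)" by (simp add: DERIV_def)
    then show ?thesis using x0 by (simp add: Fp_def)
  qed
qed

lemma Cinf_Fp: "Cinf (Fp p)"
proof (rule Cinf.coinduct[where X="\<lambda>f. \<exists>p. f = Fp p"])
  show "\<exists>q. Fp p = Fp q" by blast
next
  fix f :: "real \<Rightarrow> real" assume "\<exists>p. f = Fp p"
  then obtain p where f: "f = Fp p" by blast
  have fd: "frechet_derivative f (at x) = (\<lambda>h. Fp (qstep p) x * h)" for x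
    unfolding f using frechet_derivative_at[OF Fp_deriv[unfolded has_field_derivative_def]] by metis
  have "(\<lambda>x. frechet_derivative f (at x) v) = Fp (smult v (qstep p))" for v
    by (rule ext) (simp add: fd Fp_def)
  moreover have "f differentiable at x" for x
    unfolding f using Fp_deriv real_differentiable_def by blast
  ultimately show "\<exists>f'. f = f' \<and> (\<forall>x. f' differentiable at x) \<and>
          (\<forall>v. (\<exists>p. (\<lambda>x. frechet_derivative f' (at x) v) = Fp p) \<or> Cinf (\<lambda>x. frechet_derivative f' (at x) v))"
    by blast
qed

definition E :: "real \<Rightarrow> real" where "E = Fp 1"

lemma E_eq: "E x = (if x > 0 then exp (-(1/x)) else 0)"
  by (simp add: E_def Fp_def)

lemma E_nonneg: "E x \<ge> 0" by (simp add: E_eq)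
lemma E_pos: "x > 0 \<Longrightarrow> E x > 0" by (simp add: E_eq)
lemma E_zero: "x \<le> 0 \<Longrightarrow> E x = 0" by (simp add: E_eq)
lemma E_mono: "x \<le> y \<Longrightarrow> E x \<le> E y"
  by (auto simp: E_eq divide_simps)

definition sstep :: "real \<Rightarrow> real" where
  "sstep u = E (1 + u) * (E (1 + u) + E (1 + - u)) powr (-1)"

lemma den_pos: "E (1 + u) + E (1 + - u) > 0"
proof (cases "u > 0")
  case True then show ?thesis using E_pos[of "1+u"] E_nonneg[of "1 + -u"] by linarith
next
  case False then show ?thesis using E_pos[of "1+-u"] E_nonneg[of "1 + u"] by linarith
qed

lemma sstep_alt: "sstep u = E (1 + u) / (E (1 + u) + E (1 - u))"
  using den_pos[of u] by (simp add: sstep_def powr_minus divide_inverse)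

lemma Alg_sstep: "Alg sstep"
proof -
  have l1: "Alg (\<lambda>u::real. 1 + u)"
    using Alg.add[OF Alg.base[OF Cinf_const] Alg.base[OF Cinf_linear[OF bounded_linear_ident]]] by simp
  have l2: "Alg (\<lambda>u::real. 1 + - u)"
    using Alg.add[OF Alg.base[OF Cinf_const] Alg.base[OF Cinf_linear[OF bounded_linear_minus[OF bounded_linear_ident]]]] by simp
  have a1: "Alg (\<lambda>u. E (1 + u))" using Alg.comp[OF Cinf_Fp l1] by (simp add: E_def)
  have a2: "Alg (\<lambda>u. E (1 + - u))" using Alg.comp[OF Cinf_Fp l2] by (simp add: E_def)
  have "Alg (\<lambda>u. E (1 + u) * (E (1 + u) + E (1 + - u)) powr (-1))"
    by (rule Alg.mult[OF a1 Alg.pow[OF Alg.add[OF a1 a2] den_pos]])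
  then show ?thesis unfolding sstep_def[abs_def] .
qed

lemma Cinf_sstep: "Cinf sstep" by (rule Alg_Cinf[OF Alg_sstep])

lemma sstep_cont: "continuous_on A sstep"
  by (rule continuous_at_imp_continuous_on) (metis Cinf_diff[OF Cinf_sstep] differentiable_imp_continuous_within)

lemma sstep_left: "u \<le> -1 \<Longrightarrow> sstep u = 0" by (simp add: sstep_alt E_zero)
lemma sstep_right: "u \<ge> 1 \<Longrightarrow> sstep u = 1"
  using E_pos[of "1+u"] by (simp add: sstep_alt E_zero)
lemma sstep_sym: "sstep (- u) = 1 - sstep u"
  using den_pos[of u] by (simp add: sstep_alt field_simps)
lemma sstep_ge0: "sstep u \<ge> 0"
  using den_pos[of u] E_nonneg[of "1+u"] by (simp add: sstep_alt)
lemma sstep_le1: "sstep u \<le> 1"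
  using den_pos[of u] E_nonneg[of "1-u"] by (simp add: sstep_alt divide_simps)
lemma sstep_mono: assumes "u \<le> v" shows "sstep u \<le> sstep v"
proof -
  have a: "E (1+u) \<le> E (1+v)" "E (1-v) \<le> E (1-u)" using assms by (auto intro: E_mono)
  have "E (1+u) * E (1-v) \<le> E (1+v) * E (1-u)"
    by (rule mult_mono) (use a E_nonneg in auto)
  then show ?thesis using den_pos[of u] den_pos[of v]
    by (simp add: sstep_alt divide_simps algebra_simps)
qed

definition psi :: "real \<Rightarrow> real" where "psi u = integral {-2..u} sstep"

lemma psi_left: "u \<le> -1 \<Longrightarrow> psi u = 0"
proof -
  assume u: "u \<le> -1"
  have "integral {-2..u} sstep = integral {-2..u} (\<lambda>_. 0)"
    by (rule integral_cong) (use u in \<open>simp add: sstep_left\<close>)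
  then show ?thesis by (simp add: psi_def)
qed

lemma psi_deriv: "(psi has_real_derivative sstep x) (at x)"
proof (cases "x > -2")
  case True
  have "(psi has_real_derivative sstep x) (at x within {-2..x+1})"
    unfolding psi_def[abs_def] by (rule integral_has_real_derivative[OF sstep_cont]) (use True in simp)
  moreover have "x \<in> interior {-2..x+1}" using True by simp
  ultimately show ?thesis by (metis at_within_interior)
next
  case False
  have "((\<lambda>x. 0) has_real_derivative 0) (at x)" by (rule DERIV_const)
  then have "(psi has_real_derivative 0) (at x)"
  proof (rule has_field_derivative_transform_within_open[where S="{..<-1}"])
    show "open {..<(-1::real)}" by simp
    show "x \<in> {..<-1}" using False by simp
    fix y :: real assume "y \<in> {..<-1}"
    then show "0 = psi y" using psi_left[of y] by simp
  qed
  then show ?thesis using False sstep_left[of x] by simp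
qed

lemma psi_cont: "continuous_on A psi"
  by (rule continuous_at_imp_continuous_on) (metis DERIV_continuous psi_deriv)

lemma psi_one: "psi 1 = 1"
proof -
  define f where "f u = psi u - psi (- u) - u" for u
  have "(f has_real_derivative 0) (at x)" for x
  proof -
    have "(f has_real_derivative (sstep x - sstep (-x) * (-1) - 1)) (at x)"
      unfolding f_def[abs_def]
      by (intro derivative_intros psi_deriv DERIV_chain2[OF psi_deriv]) 
    then show ?thesis using sstep_sym[of x] by simp
  qed
  then have "f 1 = f 0" by (intro DERIV_isconst_all) auto
  then show ?thesis using psi_left[of "-1"] by (simp add: f_def)
qed

lemma psi_right: assumes "u \<ge> 1" shows "psi u = u"
proof (cases "u = 1")
  case True then show ?thesis using psi_one by simp
next
  case False
  have "(\<lambda>x. psi x - x) u = (\<lambda>x. psi x - x) 1"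
  proof (rule DERIV_isconst2[of 1 u "\<lambda>x. psi x - x"])
    show "1 < u" using assms False by simp
    show "continuous_on {1..u} (\<lambda>x. psi x - x)" by (intro continuous_intros psi_cont)
    fix x assume "1 < x" "x < u"
    have "((\<lambda>x. psi x - x) has_real_derivative (sstep x - 1)) (at x)"
      by (intro derivative_intros psi_deriv)
    then show "((\<lambda>x. psi x - x) has_real_derivative 0) (at x)" using \<open>1 < x\<close> sstep_right by simp
  qed (use assms in auto)
  then show ?thesis using psi_one by simp
qed

lemma psi_convex: "convex_on UNIV psi"
  by (rule convex_on_realI[where f'=sstep]) (auto intro: psi_deriv sstep_mono)

lemma psi_mono: "u \<le> v \<Longrightarrow> psi u \<le> psi v"
  by (rule DERIV_nonneg_imp_nondecreasing[where f=psi]) (assumption, rule exI[of _ "sstep _"], rule conjI[OF psi_deriv sstep_ge0])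

lemma psi_lip: assumes "u \<le> v" shows "psi v - v \<le> psi u - u"
proof (rule DERIV_nonpos_imp_nonincreasing[where f="\<lambda>x. psi x - x", OF assms])
  fix x
  have "((\<lambda>x. psi x - x) has_real_derivative (sstep x - 1)) (at x)"
    by (intro derivative_intros psi_deriv)
  then show "\<exists>y. ((\<lambda>x. psi x - x) has_real_derivative y) (at x) \<and> y \<le> 0"
    using sstep_le1[of x] by (intro exI[of _ "sstep x - 1"]) auto
qed

lemma psi_upper: "psi u \<le> max 0 u + 1"
proof -
  consider "u \<le> -1" | "u \<ge> 1" | "-1 < u \<and> u < 1" by linarith
  then show ?thesis
  proof cases
    case 3 then show ?thesis using psi_mono[of u 1] psi_one by simp
  qed (auto simp: psi_left psi_right)
qed

lemma Cinf_psi: "Cinf psi"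
proof (rule Cinf.intros)
  show "psi differentiable at x" for x using psi_deriv real_differentiable_def by blast
  fix v
  have "frechet_derivative psi (at x) = (\<lambda>h. sstep x * h)" for x
    using frechet_derivative_at[OF psi_deriv[unfolded has_field_derivative_def]] by metis
  then have "(\<lambda>x. frechet_derivative psi (at x) v) = (\<lambda>x. sstep x * v)" by simp
  moreover have "Alg (\<lambda>x. sstep x * v)" by (rule Alg.mult[OF Alg_sstep Alg.base[OF Cinf_const]])
  ultimately show "Cinf (\<lambda>x. frechet_derivative psi (at x) v)" using Alg_Cinf by simp
qed

definition Mx :: "real \<Rightarrow> real \<Rightarrow> real \<Rightarrow> real" where
  "Mx \<delta> a b = b + \<delta> * psi ((a - b) / \<delta>)"

lemma Mx_left: "\<delta> > 0 \<Longrightarrow> a - b \<le> -\<delta> \<Longrightarrow> Mx \<delta> a b = b"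
  unfolding Mx_def by (subst psi_left) (simp_all add: divide_simps)

lemma Mx_right: "\<delta> > 0 \<Longrightarrow> a - b \<ge> \<delta> \<Longrightarrow> Mx \<delta> a b = a"
  unfolding Mx_def by (subst psi_right) (simp_all add: divide_simps)

lemma Mx_upper: assumes "\<delta> > 0" shows "Mx \<delta> a b \<le> max a b + \<delta>"
proof -
  have "\<delta> * psi ((a - b) / \<delta>) \<le> \<delta> * (max 0 ((a - b) / \<delta>) + 1)"
    using psi_upper assms by (intro mult_left_mono) auto
  also have "\<delta> * (max 0 ((a - b) / \<delta>) + 1) = max 0 (a - b) + \<delta>"
    using assms by (simp add: max_def divide_simps algebra_simps)
  finally have "\<delta> * psi ((a - b) / \<delta>) \<le> max 0 (a - b) + \<delta>" .
  moreover have "b + max 0 (a - b) = max a b" by (simp add: max_def)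
  ultimately show ?thesis unfolding Mx_def by linarith
qed

lemma Mx_mono1: "\<delta> > 0 \<Longrightarrow> a \<le> a' \<Longrightarrow> Mx \<delta> a b \<le> Mx \<delta> a' b"
  unfolding Mx_def by (simp add: psi_mono divide_right_mono)

lemma Mx_mono2: assumes "\<delta> > 0" "b \<le> b'" shows "Mx \<delta> a b \<le> Mx \<delta> a b'"
proof -
  have "(a - b') / \<delta> \<le> (a - b) / \<delta>" using assms by (simp add: divide_right_mono)
  from psi_lip[OF this] have "psi ((a - b) / \<delta>) - (a - b) / \<delta> \<le> psi ((a - b') / \<delta>) - (a - b') / \<delta>" .
  then have "\<delta> * (psi ((a - b) / \<delta>) - (a - b) / \<delta>) \<le> \<delta> * (psi ((a - b') / \<delta>) - (a - b') / \<delta>)"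
    using assms by (simp add: mult_left_mono)
  moreover have "\<delta> * ((a - b) / \<delta>) = a - b" "\<delta> * ((a - b') / \<delta>) = a - b'" using assms by simp_all
  ultimately show ?thesis unfolding Mx_def by (simp add: right_diff_distrib)
qed

lemma Mx_convex2:
  assumes "\<delta> > 0" "0 \<le> s" "s \<le> 1"
  shows "Mx \<delta> ((1-s)*a1 + s*a2) ((1-s)*b1 + s*b2) \<le> (1-s) * Mx \<delta> a1 b1 + s * Mx \<delta> a2 b2"
proof -
  have "psi ((1 - s) *\<^sub>R ((a1 - b1)/\<delta>) + s *\<^sub>R ((a2 - b2)/\<delta>)) \<le> (1-s) * psi ((a1 - b1)/\<delta>) + s * psi ((a2 - b2)/\<delta>)"
    by (rule convex_onD[OF psi_convex]) (use assms in auto)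
  moreover have "(1 - s) *\<^sub>R ((a1 - b1)/\<delta>) + s *\<^sub>R ((a2 - b2)/\<delta>) = (((1-s)*a1 + s*a2) - ((1-s)*b1 + s*b2)) / \<delta>"
    using assms(1) by (simp add: field_simps)
  ultimately have "psi ((((1-s)*a1 + s*a2) - ((1-s)*b1 + s*b2)) / \<delta>) \<le> (1-s) * psi ((a1 - b1)/\<delta>) + s * psi ((a2 - b2)/\<delta>)"
    by simp
  then have "\<delta> * psi ((((1-s)*a1 + s*a2) - ((1-s)*b1 + s*b2)) / \<delta>) \<le> \<delta> * ((1-s) * psi ((a1 - b1)/\<delta>) + s * psi ((a2 - b2)/\<delta>))"
    using assms by (simp add: mult_left_mono)
  then show ?thesis unfolding Mx_def by (simp add: algebra_simps)
qed

lemma convex_Mx: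
  fixes f g :: "'a::real_vector \<Rightarrow> real"
  assumes "\<delta> > 0" "convex_on UNIV f" "convex_on UNIV g"
  shows "convex_on UNIV (\<lambda>x. Mx \<delta> (f x) (g x))"
proof (rule convex_onI)
  show "convex (UNIV :: 'a set)" by simp
  fix s :: real and x y assume s: "0 < s" "s < 1" and xy: "x \<in> (UNIV::'a set)" "y \<in> (UNIV::'a set)"
  have f: "f ((1 - s) *\<^sub>R x + s *\<^sub>R y) \<le> (1-s) * f x + s * f y"
    by (rule convex_onD[OF assms(2)]) (use s in auto)
  have g: "g ((1 - s) *\<^sub>R x + s *\<^sub>R y) \<le> (1-s) * g x + s * g y"
    by (rule convex_onD[OF assms(3)]) (use s in auto)
  have "Mx \<delta> (f ((1 - s) *\<^sub>R x + s *\<^sub>R y)) (g ((1 - s) *\<^sub>R x + s *\<^sub>R y))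
     \<le> Mx \<delta> ((1-s) * f x + s * f y) (g ((1 - s) *\<^sub>R x + s *\<^sub>R y))"
    by (rule Mx_mono1[OF assms(1) f])
  also have "\<dots> \<le> Mx \<delta> ((1-s) * f x + s * f y) ((1-s) * g x + s * g y)"
    by (rule Mx_mono2[OF assms(1) g])
  also have "\<dots> \<le> (1-s) * Mx \<delta> (f x) (g x) + s * Mx \<delta> (f y) (g y)"
    by (rule Mx_convex2) (use s assms in auto)
  finally show "Mx \<delta> (f ((1 - s) *\<^sub>R x + s *\<^sub>R y)) (g ((1 - s) *\<^sub>R x + s *\<^sub>R y))
     \<le> (1-s) * Mx \<delta> (f x) (g x) + s * Mx \<delta> (f y) (g y)" .
qed

lemma Alg_Mx:
  assumes "Alg f" "Alg g"
  shows "Alg (\<lambda>x. Mx \<delta> (f x) (g x))"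
proof -
  have i: "Alg (\<lambda>x. f x * (1/\<delta>) + g x * (-1/\<delta>))"
    by (rule Alg.add[OF Alg.mult[OF assms(1) Alg.base[OF Cinf_const]] Alg.mult[OF assms(2) Alg.base[OF Cinf_const]]])
  have "Alg (\<lambda>x. g x + \<delta> * psi (f x * (1/\<delta>) + g x * (-1/\<delta>)))"
    by (rule Alg.add[OF assms(2) Alg.mult[OF Alg.base[OF Cinf_const] Alg.comp[OF Cinf_psi i]]])
  moreover have "(\<lambda>x. g x + \<delta> * psi (f x * (1/\<delta>) + g x * (-1/\<delta>))) = (\<lambda>x. Mx \<delta> (f x) (g x))"
    by (rule ext) (simp add: Mx_def diff_divide_distrib)
  ultimately show ?thesis by simp
qed

primrec hseq :: "real \<Rightarrow> (nat \<Rightarrow> 'a \<Rightarrow> real) \<Rightarrow> ('a \<Rightarrow> real) \<Rightarrow> nat \<Rightarrow> 'a \<Rightarrow> real" where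
  "hseq \<delta> l f0 0 = f0"
| "hseq \<delta> l f0 (Suc k) = (\<lambda>t. Mx \<delta> (hseq \<delta> l f0 k t) (l (Suc k) t))"

lemma Alg_hseq: "Alg f0 \<Longrightarrow> (\<And>j. Alg (l j)) \<Longrightarrow> Alg (hseq \<delta> l f0 k)"
  by (induction k) (simp_all add: Alg_Mx)

lemma convex_hseq: "\<delta> > 0 \<Longrightarrow> convex_on UNIV f0 \<Longrightarrow> (\<And>j. convex_on UNIV (l j)) \<Longrightarrow> convex_on UNIV (hseq \<delta> l f0 k)"
  by (induction k) (simp_all add: convex_Mx)

lemma hseq_far:
  assumes "\<delta> > 0" "\<And>j. j \<in> {1..k} \<Longrightarrow> f0 t - l j t \<ge> \<delta>"
  shows "hseq \<delta> l f0 k t = f0 t"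
  using assms(2)
proof (induction k)
  case 0 then show ?case by simp
next
  case (Suc k)
  then have "hseq \<delta> l f0 k t = f0 t" by simp
  moreover have "f0 t - l (Suc k) t \<ge> \<delta>" using Suc.prems by simp
  ultimately show ?case using Mx_right[OF assms(1)] by simp
qed

lemma hseq_near:
  assumes d: "\<delta> > 0" and j: "j \<in> {1..N}" and mu: "\<mu> \<ge> (real N + 1) * \<delta>"
    and f0: "f0 t \<le> l j t - \<mu>"
    and li: "\<And>i. i \<in> {1..N} \<Longrightarrow> i \<noteq> j \<Longrightarrow> l i t \<le> l j t - \<mu>"
  shows "hseq \<delta> l f0 N t = l j t"
proof -
  have A: "k < j \<Longrightarrow> hseq \<delta> l f0 k t \<le> l j t - \<mu> + real k * \<delta>" for k
  proof (induction k)
    case 0 then show ?case using f0 by simp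
  next
    case (Suc k)
    have h: "hseq \<delta> l f0 k t \<le> l j t - \<mu> + real k * \<delta>" using Suc by simp
    have l: "l (Suc k) t \<le> l j t - \<mu>" using li[of "Suc k"] Suc.prems j by simp
    have "hseq \<delta> l f0 (Suc k) t \<le> max (hseq \<delta> l f0 k t) (l (Suc k) t) + \<delta>"
      using Mx_upper[OF d] by simp
    also have "\<dots> \<le> l j t - \<mu> + real k * \<delta> + \<delta>"
    proof -
      have "real k * \<delta> \<ge> 0" using d by simp
      then show ?thesis using h l by (simp add: max_def)
    qed
    finally show ?case by (simp add: algebra_simps)
  qed
  have B: "j \<le> k \<Longrightarrow> k \<le> N \<Longrightarrow> hseq \<delta> l f0 k t = l j t" for k
  proof (induction k)
    case 0 then show ?case using j by simp
  next
    case (Suc k)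
    show ?case
    proof (cases "Suc k = j")
      case True
      have "hseq \<delta> l f0 k t \<le> l j t - \<mu> + real k * \<delta>" using A[of k] True by simp
      moreover have "real k * \<delta> + \<delta> \<le> \<mu>"
      proof -
        have "real (Suc k) \<le> real N + 1" using Suc.prems by simp
        then have "real (Suc k) * \<delta> \<le> (real N + 1) * \<delta>" using d by (intro mult_right_mono) auto
        then show ?thesis using mu by (simp add: algebra_simps)
      qed
      ultimately have "hseq \<delta> l f0 k t - l (Suc k) t \<le> - \<delta>" using True by simp
      then have "hseq \<delta> l f0 k t - l (Suc k) t \<le> - \<delta>" using True by simp
      then have "hseq \<delta> l f0 (Suc k) t = l (Suc k) t" using Mx_left[OF d] by simp
      then show ?thesis using True by simp
    next
      case False
      then have "hseq \<delta> l f0 k t = l j t" using Suc by simp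
      moreover have "l (Suc k) t \<le> l j t - \<mu>" using li[of "Suc k"] Suc.prems False j by simp
      moreover have "\<delta> \<le> \<mu>" using mu d
        by (smt (verit) mult_le_cancel_right1 of_nat_0_le_iff)
      ultimately show ?thesis using Mx_right[OF d] by simp
    qed
  qed
  show ?thesis using B[of N] j by simp
qed

inductive gord :: "real \<Rightarrow> (real^'q::finite \<Rightarrow> real) \<Rightarrow> bool" where
  zero: "gord d (\<lambda>t. 0)"
| const: "gord 0 (\<lambda>t. c)"
| lin: "gord 1 (\<lambda>t. t \<bullet> v)"
| pw: "gord (2 * r) (\<lambda>t. (1 + t \<bullet> t) powr r)"
| mul: "gord d u \<Longrightarrow> gord e w \<Longrightarrow> gord (d + e) (\<lambda>t. u t * w t)"
| add: "gord d u \<Longrightarrow> gord d w \<Longrightarrow> gord d (\<lambda>t. u t + w t)"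
| weak: "gord d u \<Longrightarrow> d \<le> e \<Longrightarrow> gord e u"

lemma pw_bound:
  fixes t :: "real^'q::finite"
  assumes "norm t \<ge> 1"
  shows "(1 + t \<bullet> t) powr r \<le> (2 powr r + 1) * norm t powr (2 * r)"
proof -
  have "norm t > 0" using assms by linarith
  then have n: "t \<bullet> t = norm t powr 2" by (simp add: power2_norm_eq_inner[symmetric] powr_numeral)
  have np: "norm t > 0" using assms by linarith
  have eq0: "(norm t powr 2) powr r = norm t powr (2 * r)" by (simp only: powr_powr)
  have eq1: "(norm t ^ 2) powr r = norm t powr (2 * r)"
    using eq0 np by (simp add: powr_numeral)
  note eq = eq0 eq1
  show ?thesis
  proof (cases "r \<ge> 0")
    case True
    have "(1 + t \<bullet> t) powr r \<le> (2 * norm t powr 2) powr r"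
      using assms True n np by (intro powr_mono2) (auto simp: ge_one_powr_ge_zero)
    also have "\<dots> = 2 powr r * norm t powr (2 * r)" by (simp add: powr_mult eq)
    also have "\<dots> \<le> (2 powr r + 1) * norm t powr (2 * r)" by (simp add: algebra_simps)
    finally show ?thesis .
  next
    case False
    have "(1 + t \<bullet> t) powr r \<le> (norm t powr 2) powr r"
      using False n np by (intro powr_mono2') auto
    also have "\<dots> = norm t powr (2 * r)" by (rule eq)
    also have "\<dots> \<le> (2 powr r + 1) * norm t powr (2 * r)" by (simp add: algebra_simps)
    finally show ?thesis .
  qed
qed

lemma gord_bound:
  assumes "gord d u"
  shows "\<exists>C\<ge>0. \<forall>t. norm t \<ge> 1 \<longrightarrow> \<bar>u t\<bar> \<le> C * norm t powr d"
  using assms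
proof induction
  case (zero d) show ?case by (intro exI[of _ 0]) simp
next
  case (const c) show ?case by (intro exI[of _ "\<bar>c\<bar>"]) auto
next
  case (lin v) show ?case
    by (intro exI[of _ "norm v"]) (auto simp: Cauchy_Schwarz_ineq2 mult.commute)
next
  case (pw r) show ?case
  proof (intro exI[of _ "2 powr r + 1"] conjI allI impI)
    fix t :: "real^'a" assume "norm t \<ge> 1"
    have "1 + t \<bullet> t > 0" by (simp add: add_pos_nonneg)
    then show "\<bar>(1 + t \<bullet> t) powr r\<bar> \<le> (2 powr r + 1) * norm t powr (2 * r)"
      using pw_bound[OF \<open>norm t \<ge> 1\<close>] by simp
  qed (simp add: add_nonneg_nonneg)
next
  case (mul d u e w)
  then obtain C1 C2 where c1: "C1 \<ge> 0" "\<forall>t. norm t \<ge> 1 \<longrightarrow> \<bar>u t\<bar> \<le> C1 * norm t powr d"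
    and c2: "C2 \<ge> 0" "\<forall>t. norm t \<ge> 1 \<longrightarrow> \<bar>w t\<bar> \<le> C2 * norm t powr e" by blast
  show ?case
  proof (intro exI[of _ "C1 * C2"] conjI allI impI)
    show "C1 * C2 \<ge> 0" using c1 c2 by simp
    fix t :: "real^'a" assume t: "norm t \<ge> 1"
    have "\<bar>u t * w t\<bar> = \<bar>u t\<bar> * \<bar>w t\<bar>" by (simp add: abs_mult)
    also have "\<dots> \<le> (C1 * norm t powr d) * (C2 * norm t powr e)"
      by (rule mult_mono) (use c1 c2 t in auto)
    also have "\<dots> = C1 * C2 * norm t powr (d + e)" by (simp add: powr_add)
    finally show "\<bar>u t * w t\<bar> \<le> C1 * C2 * norm t powr (d + e)" .
  qed
next
  case (add d u w)
  then obtain C1 C2 where c1: "C1 \<ge> 0" "\<forall>t. norm t \<ge> 1 \<longrightarrow> \<bar>u t\<bar> \<le> C1 * norm t powr d"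
    and c2: "C2 \<ge> 0" "\<forall>t. norm t \<ge> 1 \<longrightarrow> \<bar>w t\<bar> \<le> C2 * norm t powr d" by blast
  show ?case
  proof (intro exI[of _ "C1 + C2"] conjI allI impI)
    show "C1 + C2 \<ge> 0" using c1 c2 by simp
    fix t :: "real^'a" assume t: "norm t \<ge> 1"
    have "\<bar>u t + w t\<bar> \<le> \<bar>u t\<bar> + \<bar>w t\<bar>" by (rule abs_triangle_ineq)
    also have "\<dots> \<le> C1 * norm t powr d + C2 * norm t powr d" using c1 c2 t by (intro add_mono) auto
    finally show "\<bar>u t + w t\<bar> \<le> (C1 + C2) * norm t powr d" by (simp add: algebra_simps)
  qed
next
  case (weak d u e)
  then obtain C where c: "C \<ge> 0" "\<forall>t. norm t \<ge> 1 \<longrightarrow> \<bar>u t\<bar> \<le> C * norm t powr d" by blast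
  show ?case
  proof (intro exI[of _ C] conjI allI impI)
    show "C \<ge> 0" by (rule c(1))
    fix t :: "real^'a" assume t: "norm t \<ge> 1"
    have "norm t powr d \<le> norm t powr e" using t weak.hyps(2) by (intro powr_mono) auto
    then have "C * norm t powr d \<le> C * norm t powr e" using c(1) by (rule mult_left_mono)
    then show "\<bar>u t\<bar> \<le> C * norm t powr e" using c(2) t by force
  qed
qed

lemma gord_deriv:
  assumes "gord d u"
  shows "\<exists>D. (\<forall>x. (u has_derivative D x) (at x)) \<and> (\<forall>v. gord (d - 1) (\<lambda>x. D x v))"
  using assms
proof induction
  case (zero d)
  show ?case by (intro exI[of _ "\<lambda>x h. 0"]) (simp add: gord.zero)
next
  case (const c)
  show ?case by (intro exI[of _ "\<lambda>x h. 0"]) (simp add: gord.zero)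
next
  case (lin v)
  show ?case
  proof (intro exI[of _ "\<lambda>x h. h \<bullet> v"] conjI allI)
    fix x show "((\<lambda>t. t \<bullet> v) has_derivative (\<lambda>h. h \<bullet> v)) (at x)"
      by (rule bounded_linear_imp_has_derivative) (rule bounded_linear_inner_left)
  next
    fix w show "gord (1 - 1) (\<lambda>x. w \<bullet> v)" using gord.const[of "w \<bullet> v"] by simp
  qed
next
  case (pw r)
  show ?case
  proof (intro exI[of _ "\<lambda>x h. (2 * r) * (1 + x \<bullet> x) powr (r - 1) * (x \<bullet> h)"] conjI allI)
    fix x :: "real^'a"
    have pos: "1 + x \<bullet> x > 0" by (simp add: add_pos_nonneg)
    have d1: "((\<lambda>t. 1 + t \<bullet> t) has_derivative (\<lambda>h. x \<bullet> h + h \<bullet> x)) (at x)"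
      using has_derivative_add[OF has_derivative_const has_derivative_inner[OF has_derivative_ident has_derivative_ident]]
      by simp
    have "((\<lambda>t. (1 + t \<bullet> t) powr r) has_derivative
        (\<lambda>h. (1 + x \<bullet> x) powr r * (0 * ln (1 + x \<bullet> x) + (x \<bullet> h + h \<bullet> x) * r / (1 + x \<bullet> x)))) (at x)"
      by (rule has_derivative_powr[OF d1 has_derivative_const pos]) simp
    moreover have "(1 + x \<bullet> x) powr r * (0 * ln (1 + x \<bullet> x) + (x \<bullet> h + h \<bullet> x) * r / (1 + x \<bullet> x))
        = (2 * r) * (1 + x \<bullet> x) powr (r - 1) * (x \<bullet> h)" for h
      using pos by (simp add: powr_diff inner_commute field_simps)
    ultimately show "((\<lambda>t. (1 + t \<bullet> t) powr r) has_derivative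
        (\<lambda>h. (2 * r) * (1 + x \<bullet> x) powr (r - 1) * (x \<bullet> h))) (at x)" by simp
  next
    fix v :: "real^'a"
    have "gord (0 + 2 * (r - 1) + 1) (\<lambda>x. (2 * r) * (1 + x \<bullet> x) powr (r - 1) * (x \<bullet> v))"
      by (rule gord.mul[OF gord.mul[OF gord.const gord.pw] gord.lin])
    then show "gord (2 * r - 1) (\<lambda>x. (2 * r) * (1 + x \<bullet> x) powr (r - 1) * (x \<bullet> v))"
      by (rule gord.weak) simp
  qed
next
  case (mul d u e w)
  then obtain D1 D2 where d1: "\<forall>x. (u has_derivative D1 x) (at x)" "\<forall>v. gord (d - 1) (\<lambda>x. D1 x v)"
    and d2: "\<forall>x. (w has_derivative D2 x) (at x)" "\<forall>v. gord (e - 1) (\<lambda>x. D2 x v)" by blast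
  show ?case
  proof (intro exI[of _ "\<lambda>x h. u x * D2 x h + D1 x h * w x"] conjI allI)
    fix x show "((\<lambda>x. u x * w x) has_derivative (\<lambda>h. u x * D2 x h + D1 x h * w x)) (at x)"
      by (rule has_derivative_mult) (use d1 d2 in blast)+
  next
    fix v
    have a: "gord (d + e - 1) (\<lambda>x. u x * D2 x v)"
      by (rule gord.weak[OF gord.mul[OF mul.hyps(1) d2(2)[rule_format]]]) simp
    have b: "gord (d + e - 1) (\<lambda>x. D1 x v * w x)"
      by (rule gord.weak[OF gord.mul[OF d1(2)[rule_format] mul.hyps(2)]]) simp
    show "gord (d + e - 1) (\<lambda>x. u x * D2 x v + D1 x v * w x)"
      by (rule gord.add[OF a b])
  qed
next
  case (add d u w)
  then obtain D1 D2 where d1: "\<forall>x. (u has_derivative D1 x) (at x)" "\<forall>v. gord (d - 1) (\<lambda>x. D1 x v)"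
    and d2: "\<forall>x. (w has_derivative D2 x) (at x)" "\<forall>v. gord (d - 1) (\<lambda>x. D2 x v)" by blast
  show ?case
  proof (intro exI[of _ "\<lambda>x h. D1 x h + D2 x h"] conjI allI)
    fix x show "((\<lambda>x. u x + w x) has_derivative (\<lambda>h. D1 x h + D2 x h)) (at x)"
      by (rule has_derivative_add) (use d1 d2 in blast)+
  next
    fix v show "gord (d - 1) (\<lambda>x. D1 x v + D2 x v)"
      by (rule gord.add) (use d1 d2 in blast)+
  qed
next
  case (weak d u e)
  then obtain D where d: "\<forall>x. (u has_derivative D x) (at x)" "\<forall>v. gord (d - 1) (\<lambda>x. D x v)" by blast
  show ?case
  proof (intro exI[of _ D] conjI allI)
    fix x show "(u has_derivative D x) (at x)" using d by blast
  next
    fix v show "gord (e - 1) (\<lambda>x. D x v)"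
      by (rule gord.weak[OF d(2)[rule_format]]) (use weak.hyps in simp)
  qed
qed

lemma gord_hpartial:
  assumes "gord d u"
  shows "gord (d - real (length is)) (hpartial is u)"
proof (induction "is")
  case Nil then show ?case using assms by simp
next
  case (Cons i "is")
  from gord_deriv[OF Cons.IH] obtain D where
    d: "\<forall>x. (hpartial is u has_derivative D x) (at x)" "\<forall>v. gord (d - real (length is) - 1) (\<lambda>x. D x v)"
    by blast
  have "hpartial (i # is) u = (\<lambda>x. D x (axis i 1))"
  proof (rule ext)
    fix x
    have "frechet_derivative (hpartial is u) (at x) = D x" using d(1) frechet_derivative_at by metis
    then show "hpartial (i # is) u x = D x (axis i 1)" by (simp add: partial_deriv_def)
  qed
  then show ?case using d(2) by (simp add: algebra_simps)
qed

lemma hpartial_local: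
  fixes f g :: "real^'q::finite \<Rightarrow> real"
  assumes "open U" "\<And>x. x \<in> U \<Longrightarrow> f x = g x" "x \<in> U"
  shows "hpartial is f x = hpartial is g x"
  using assms(3)
proof (induction "is" arbitrary: x)
  case Nil then show ?case using assms(2) by simp
next
  case (Cons i "is")
  have "(hpartial is f has_derivative D) (at x) \<longleftrightarrow> (hpartial is g has_derivative D) (at x)" for D
    using has_derivative_transform_within_open[OF _ assms(1) Cons.prems, of "hpartial is f" D UNIV "hpartial is g"]
      has_derivative_transform_within_open[OF _ assms(1) Cons.prems, of "hpartial is g" D UNIV "hpartial is f"]
      Cons.IH by metis
  then have "frechet_derivative (hpartial is f) (at x) = frechet_derivative (hpartial is g) (at x)"
    unfolding frechet_derivative_def by simp
  then show ?case by (simp add: partial_deriv_def)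
qed

lemma Cinf_inner_self: "Cinf (\<lambda>t::'a::real_inner. t \<bullet> t)"
proof (rule Cinf.intros)
  have d: "((\<lambda>t. t \<bullet> t) has_derivative (\<lambda>h. x \<bullet> h + h \<bullet> x)) (at x)" for x :: 'a
    by (rule has_derivative_inner[OF has_derivative_ident has_derivative_ident])
  show "(\<lambda>t. t \<bullet> t) differentiable at x" for x :: 'a using d differentiable_def by blast
  fix v :: 'a
  have "(\<lambda>x. frechet_derivative (\<lambda>t. t \<bullet> t) (at x) v) = (\<lambda>x. x \<bullet> v + v \<bullet> x)"
    using frechet_derivative_at[OF d] by metis
  moreover have "bounded_linear (\<lambda>x::'a. x \<bullet> v + v \<bullet> x)"
    by (intro bounded_linear_add bounded_linear_inner_left bounded_linear_inner_right bounded_linear_ident)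
  ultimately show "Cinf (\<lambda>x. frechet_derivative (\<lambda>t. t \<bullet> t) (at x) v)" using Cinf_linear by simp
qed

lemma sqrt_facts:
  fixes t :: "real^'q::finite"
  shows "(1 + t \<bullet> t) powr (1/2) = norm ((1::real), t)"
    and "norm t \<le> (1 + t \<bullet> t) powr (1/2)"
    and "(1 + t \<bullet> t) powr (1/2) \<le> 1 + norm t"
proof -
  have tt: "t \<bullet> t = norm t ^ 2" by (simp add: power2_norm_eq_inner)
  have pos: "0 \<le> 1 + t \<bullet> t" by (simp add: add_nonneg_nonneg)
  have e: "(1 + t \<bullet> t) powr (1/2) = sqrt (1 + norm t ^ 2)"
    using pos by (simp add: powr_half_sqrt tt)
  show "(1 + t \<bullet> t) powr (1/2) = norm ((1::real), t)" by (simp add: e norm_Pair)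
  show "norm t \<le> (1 + t \<bullet> t) powr (1/2)" unfolding e
    by (rule real_le_rsqrt) simp
  have "sqrt (1 + norm t ^ 2) \<le> sqrt ((1 + norm t) ^ 2)"
    by (rule real_sqrt_le_mono) (simp add: power2_eq_square algebra_simps)
  then show "(1 + t \<bullet> t) powr (1/2) \<le> 1 + norm t" unfolding e by simp
qed

lemma convex_normpair: "convex_on UNIV (\<lambda>t::'a::real_normed_vector. norm ((1::real), t))"
proof (rule convex_onI)
  show "convex (UNIV :: 'a set)" by simp
  fix s :: real and x y :: 'a assume s: "0 < s" "s < 1"
  have "((1::real), (1 - s) *\<^sub>R x + s *\<^sub>R y) = (1 - s) *\<^sub>R ((1::real), x) + s *\<^sub>R ((1::real), y)"
    by (simp add: algebra_simps)
  then have "norm ((1::real), (1 - s) *\<^sub>R x + s *\<^sub>R y) \<le> norm ((1 - s) *\<^sub>R ((1::real), x)) + norm (s *\<^sub>R ((1::real), y))"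
    by (metis norm_triangle_ineq)
  also have "\<dots> = (1 - s) * norm ((1::real), x) + s * norm ((1::real), y)"
    using s by (simp only: norm_scaleR)
  finally show "norm ((1::real), (1 - s) *\<^sub>R x + s *\<^sub>R y) \<le> (1 - s) * norm ((1::real), x) + s * norm ((1::real), y)" .
qed

theorem lemma6p1:
  fixes N :: nat and c :: "nat \<Rightarrow> real" and S T :: "nat \<Rightarrow> real^'q::finite"
  assumes "N \<ge> 2"
    and "\<And>i j. i \<in> {1..N} \<Longrightarrow> j \<in> {1..N} \<Longrightarrow> i \<noteq> j \<Longrightarrow>
           c i - c j + S i \<bullet> (T j - T i) < 0"
  shows "\<exists>g :: real^'q \<Rightarrow> real. smooth g \<and> convex_on UNIV g \<and>
     (\<exists>\<epsilon>>0. \<epsilon> < Min {norm (T i - T j) | i j. i \<in> {1..N} \<and> j \<in> {1..N} \<and> i \<noteq> j} \<and>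
        (\<forall>j\<in>{1..N}. \<forall>t\<in>ball (T j) \<epsilon>. g t = c j + S j \<bullet> (t - T j))) \<and>
     (\<exists>M>1. \<forall>k::nat\<ge>1. \<exists>L>0. \<forall>t. norm t \<ge> M \<longrightarrow>
        (\<forall>is. length is = k \<longrightarrow> \<bar>hpartial is g t\<bar> \<le> L * norm t powr (1 - real k)))"
proof -
  let ?I = "{1..N}"
  define l where "l j t = c j + S j \<bullet> (t - T j)" for j and t :: "real^'q"
  define gap where "gap i j = c j - c i - S i \<bullet> (T j - T i)" for i j
  define P where "P = {(i,j). i \<in> ?I \<and> j \<in> ?I \<and> i \<noteq> j}"
  have Pfin: "finite P" unfolding P_def
    by (rule finite_subset[of _ "?I \<times> ?I"]) auto
  have Pne: "(1,2) \<in> P" using assms(1) unfolding P_def by auto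
  have gap_pos: "gap i j > 0" if "(i,j) \<in> P" for i j
    using assms(2)[of i j] that unfolding P_def gap_def by auto
  define \<gamma> where "\<gamma> = Min ((\<lambda>(i,j). gap i j) ` P)"
  have \<gamma>pos: "\<gamma> > 0"
    unfolding \<gamma>_def using Pfin Pne gap_pos by (subst Min_gr_iff) auto
  have \<gamma>le: "\<gamma> \<le> gap i j" if "(i,j) \<in> P" for i j
    unfolding \<gamma>_def using Pfin that by (intro Min_le) force+
  define K where "K = (\<Sum>i\<in>?I. norm (S i))"
  define C where "C = (\<Sum>i\<in>?I. \<bar>c i\<bar>)"
  define R where "R = (\<Sum>i\<in>?I. norm (T i))"
  have K0: "K \<ge> 0" unfolding K_def by (simp add: sum_nonneg)
  have C0: "C \<ge> 0" unfolding C_def by (simp add: sum_nonneg)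
  have R0: "R \<ge> 0" unfolding R_def by (simp add: sum_nonneg)
  have SK: "norm (S i) \<le> K" if "i \<in> ?I" for i
    unfolding K_def using that by (intro member_le_sum) auto
  have cC: "\<bar>c i\<bar> \<le> C" if "i \<in> ?I" for i
    unfolding C_def using that by (intro member_le_sum) auto
  have TR: "norm (T i) \<le> R" if "i \<in> ?I" for i
    unfolding R_def using that by (intro member_le_sum) auto
  have Tdist: "T i \<noteq> T j" if "i \<in> ?I" "j \<in> ?I" "i \<noteq> j" for i j
    using assms(2)[of i j] assms(2)[of j i] that by auto
  define Dset where "Dset = {norm (T i - T j) | i j. i \<in> {1..N} \<and> j \<in> {1..N} \<and> i \<noteq> j}"
  have Dfin: "finite Dset"
  proof (rule finite_subset)
    show "Dset \<subseteq> {norm (T i - T j) | i j. i \<in> ?I \<and> j \<in> ?I}" unfolding Dset_def by blast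
    show "finite {norm (T i - T j) | i j. i \<in> ?I \<and> j \<in> ?I}" by (rule finite_image_set2) auto
  qed
  have i12: "(1::nat) \<in> ?I" "(2::nat) \<in> ?I" "(1::nat) \<noteq> 2" using assms(1) by auto
  have "norm (T 1 - T 2) \<in> Dset" unfolding Dset_def using i12 by blast
  then have Dne: "Dset \<noteq> {}" by blast
  have Dpos: "Min Dset > 0"
    using Dfin Dne Tdist unfolding Dset_def by (subst Min_gr_iff) auto
  define \<epsilon> where "\<epsilon> = min (Min Dset / 2) (min 1 (\<gamma> / (4 * K + 4)))"
  have \<epsilon>pos: "\<epsilon> > 0" unfolding \<epsilon>_def using Dpos \<gamma>pos K0 by simp
  have \<epsilon>1: "\<epsilon> \<le> 1" unfolding \<epsilon>_def by simp
  have \<epsilon>D: "\<epsilon> < Min Dset" unfolding \<epsilon>_def using Dpos by simp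
  have \<epsilon>\<gamma>: "\<epsilon> \<le> \<gamma> / (4 * K + 4)" unfolding \<epsilon>_def by simp
  define \<mu> where "\<mu> = \<gamma> / 2"
  define \<delta> where "\<delta> = \<mu> / (real N + 1)"
  define A where "A = K + 1"
  define B where "B = A * (2 + R) + C + K + \<mu> + 1"
  define f0 where "f0 = (\<lambda>t::real^'q. A * (1 + t \<bullet> t) powr (1/2) + (- B))"
  define g where "g = hseq \<delta> l f0 N"
  define M0 where "M0 = B + C + K * R + \<delta> + 2"
  have \<mu>pos: "\<mu> > 0" unfolding \<mu>_def using \<gamma>pos by simp
  have \<delta>pos: "\<delta> > 0" unfolding \<delta>_def using \<mu>pos by simp
  have \<mu>\<delta>: "\<mu> \<ge> (real N + 1) * \<delta>" unfolding \<delta>_def by simp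
  have A1: "A \<ge> 1" unfolding A_def using K0 by simp
  have B0: "B > 0" unfolding B_def using A1 R0 C0 K0 \<mu>pos
    by (smt (verit) mult_nonneg_nonneg)
  have f0_le: "f0 t \<le> A * (1 + norm t) - B" for t
    unfolding f0_def using sqrt_facts(3)[of t] A1 by (simp add: mult_left_mono)
  have f0_ge: "f0 t \<ge> A * norm t - B" for t
    unfolding f0_def using sqrt_facts(2)[of t] A1 by (simp add: mult_left_mono)

  have Alg_f0: "Alg f0"
  proof -
    have p: "Alg (\<lambda>t::real^'q. 1 + t \<bullet> t)"
      by (rule Alg.add[OF Alg.base[OF Cinf_const] Alg.base[OF Cinf_inner_self]])
    have "Alg (\<lambda>t::real^'q. A * (1 + t \<bullet> t) powr (1/2) + (- B))"
      by (rule Alg.add[OF Alg.mult[OF Alg.base[OF Cinf_const] Alg.pow[OF p]] Alg.base[OF Cinf_const]])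
        (simp add: add_pos_nonneg)
    then show ?thesis unfolding f0_def .
  qed
  have Alg_l: "Alg (l j)" for j
  proof -
    have "Alg (\<lambda>t::real^'q. c j + (S j \<bullet> t + (- (S j \<bullet> T j))))"
      by (rule Alg.add[OF Alg.base[OF Cinf_const] Alg.add[OF Alg.base[OF Cinf_linear[OF bounded_linear_inner_right]] Alg.base[OF Cinf_const]]])
    moreover have "(\<lambda>t::real^'q. c j + (S j \<bullet> t + (- (S j \<bullet> T j)))) = l j"
      by (rule ext) (simp add: l_def inner_diff_right)
    ultimately show ?thesis by simp
  qed
  have conv_f0: "convex_on UNIV f0"
  proof (rule convex_onI)
    show "convex (UNIV :: (real^'q) set)" by simp
    fix s :: real and x y :: "real^'q" assume s: "0 < s" "s < 1"
    have "norm ((1::real), (1 - s) *\<^sub>R x + s *\<^sub>R y) \<le> (1 - s) * norm ((1::real), x) + s * norm ((1::real), y)"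
      by (rule convex_onD[OF convex_normpair]) (use s in auto)
    then have "A * norm ((1::real), (1 - s) *\<^sub>R x + s *\<^sub>R y) \<le> A * ((1 - s) * norm ((1::real), x) + s * norm ((1::real), y))"
      using A1 by (intro mult_left_mono) auto
    then show "f0 ((1 - s) *\<^sub>R x + s *\<^sub>R y) \<le> (1 - s) * f0 x + s * f0 y"
      unfolding f0_def sqrt_facts(1) by (simp add: algebra_simps)
  qed
  have conv_l: "convex_on UNIV (l j)" for j
  proof (rule convex_onI)
    show "convex (UNIV :: (real^'q) set)" by simp
    fix s :: real and x y :: "real^'q"
    show "l j ((1 - s) *\<^sub>R x + s *\<^sub>R y) \<le> (1 - s) * l j x + s * l j y"
      by (simp add: l_def inner_diff_right inner_add_right algebra_simps)
  qed

  have near: "g t = l j t" if j: "j \<in> ?I" and t: "t \<in> ball (T j) \<epsilon>" for j t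
  proof -
    have nt: "norm (t - T j) < \<epsilon>" using t by (simp add: dist_norm norm_minus_commute)
    have li: "l i t \<le> l j t - \<mu>" if i: "i \<in> ?I" "i \<noteq> j" for i
    proof -
      have eq: "l j t - l i t = gap i j + (S j - S i) \<bullet> (t - T j)"
        by (simp add: l_def gap_def inner_diff_right inner_diff_left algebra_simps)
      have "\<bar>(S j - S i) \<bullet> (t - T j)\<bar> \<le> norm (S j - S i) * norm (t - T j)"
        by (rule Cauchy_Schwarz_ineq2)
      also have "\<dots> \<le> (2 * K) * \<epsilon>"
      proof (rule mult_mono)
        show "norm (S j - S i) \<le> 2 * K"
          using norm_triangle_ineq4[of "S j" "S i"] SK[OF j] SK[OF i(1)] by simp
      qed (use nt K0 in auto)
      also have "\<dots> \<le> (2 * K) * (\<gamma> / (4 * K + 4))" using \<epsilon>\<gamma> K0 by (intro mult_left_mono) auto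
      also have "\<dots> \<le> \<gamma> / 2" using K0 \<gamma>pos by (simp add: divide_simps)
      finally have "\<bar>(S j - S i) \<bullet> (t - T j)\<bar> \<le> \<gamma> / 2" .
      moreover have "\<gamma> \<le> gap i j" using \<gamma>le[of i j] i j unfolding P_def by auto
      ultimately show ?thesis using eq unfolding \<mu>_def by linarith
    qed
    have f0t: "f0 t \<le> l j t - \<mu>"
    proof -
      have "norm t \<le> norm (T j) + norm (t - T j)" using norm_triangle_ineq[of "T j" "t - T j"] by simp
      then have "norm t \<le> R + 1" using TR[OF j] nt \<epsilon>1 by linarith
      then have "A * (1 + norm t) \<le> A * (2 + R)" using A1 by (intro mult_left_mono) auto
      then have a: "f0 t \<le> A * (2 + R) - B" using f0_le[of t] by linarith
      have "\<bar>S j \<bullet> (t - T j)\<bar> \<le> norm (S j) * norm (t - T j)" by (rule Cauchy_Schwarz_ineq2)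
      also have "\<dots> \<le> K * 1" using SK[OF j] nt \<epsilon>1 K0 by (intro mult_mono) auto
      finally have "l j t \<ge> - C - K" using cC[OF j] unfolding l_def by linarith
      then show ?thesis using a unfolding B_def by linarith
    qed
    show ?thesis unfolding g_def
      by (rule hseq_near[of \<delta> j N \<mu> f0 t l, OF \<delta>pos j \<mu>\<delta> f0t li]) auto
  qed

  have far: "g t = f0 t" if t: "norm t > M0 - 1" for t
    unfolding g_def
  proof (rule hseq_far[OF \<delta>pos])
    fix j assume j: "j \<in> {1..N}"
    have "\<bar>S j \<bullet> (t - T j)\<bar> \<le> norm (S j) * norm (t - T j)" by (rule Cauchy_Schwarz_ineq2)
    also have "\<dots> \<le> K * (norm t + R)"
      using SK[OF j] TR[OF j] norm_triangle_ineq4[of t "T j"] K0 by (intro mult_mono) auto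
    finally have "l j t \<le> C + K * norm t + K * R" using cC[OF j] unfolding l_def
      by (simp add: algebra_simps)
    moreover have "f0 t \<ge> (K + 1) * norm t - B" using f0_ge[of t] unfolding A_def .
    ultimately show "f0 t - l j t \<ge> \<delta>" using t unfolding M0_def by (simp add: algebra_simps)
  qed

  have gord_f0: "gord 1 f0"
  proof -
    have a: "gord 1 (\<lambda>t::real^'q. A * (1 + t \<bullet> t) powr (1/2))"
      by (rule gord.weak[OF gord.mul[OF gord.const gord.pw]]) simp
    have b: "gord 1 (\<lambda>t::real^'q. - B)"
      by (rule gord.weak[OF gord.const]) simp
    show ?thesis unfolding f0_def by (rule gord.add[OF a b])
  qed

  show ?thesis
  proof (intro exI[of _ g] conjI)
    show "smooth g" unfolding g_def
      by (rule Cinf_smooth[OF Alg_Cinf[OF Alg_hseq[OF Alg_f0 Alg_l]]])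
    show "convex_on UNIV g" unfolding g_def
      by (rule convex_hseq[OF \<delta>pos conv_f0 conv_l])
    show "\<exists>\<epsilon>>0. \<epsilon> < Min {norm (T i - T j) | i j. i \<in> {1..N} \<and> j \<in> {1..N} \<and> i \<noteq> j} \<and>
        (\<forall>j\<in>{1..N}. \<forall>t\<in>ball (T j) \<epsilon>. g t = c j + S j \<bullet> (t - T j))"
      using \<epsilon>pos \<epsilon>D near unfolding Dset_def l_def by blast
    show "\<exists>M>1. \<forall>k::nat\<ge>1. \<exists>L>0. \<forall>t. norm t \<ge> M \<longrightarrow>
        (\<forall>is. length is = k \<longrightarrow> \<bar>hpartial is g t\<bar> \<le> L * norm t powr (1 - real k))"
    proof (rule exI[of _ M0], intro conjI allI impI)
      show "M0 > 1" unfolding M0_def using B0 C0 K0 R0 \<delta>pos by (smt (verit) mult_nonneg_nonneg)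
      fix k :: nat assume k: "k \<ge> 1"
      have "\<forall>is. \<exists>Cb. Cb \<ge> 0 \<and> (\<forall>t. norm t \<ge> 1 \<longrightarrow> \<bar>hpartial is f0 t\<bar> \<le> Cb * norm t powr (1 - real (length is)))"
        using gord_bound[OF gord_hpartial[OF gord_f0]] by blast
      then obtain CF where CF: "\<And>is. CF is \<ge> 0"
        "\<And>is t. norm t \<ge> 1 \<Longrightarrow> \<bar>hpartial is f0 t\<bar> \<le> CF is * norm t powr (1 - real (length is))"
        by metis
      define Lk where "Lk = {is :: 'q list. set is \<subseteq> UNIV \<and> length is = k}"
      have Lkfin: "finite Lk" unfolding Lk_def by (rule finite_lists_length_eq) simp
      define L where "L = 1 + (\<Sum>is\<in>Lk. CF is)"
      show "\<exists>L>0. \<forall>t. norm t \<ge> M0 \<longrightarrow>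
        (\<forall>is. length is = k \<longrightarrow> \<bar>hpartial is g t\<bar> \<le> L * norm t powr (1 - real k))"
      proof (intro exI[of _ L] conjI)
        show "L > 0" unfolding L_def using CF(1) by (smt (verit) sum_nonneg)
        show "\<forall>t. norm t \<ge> M0 \<longrightarrow>
          (\<forall>is. length is = k \<longrightarrow> \<bar>hpartial is g t\<bar> \<le> L * norm t powr (1 - real k))"
        proof (intro allI impI)
        fix t :: "real^'q" and "is" :: "'q list"
        assume t: "norm t \<ge> M0" and len: "length is = k"
        have U: "open (- cball (0::real^'q) (M0 - 1))" by (simp add: open_Compl)
        have "hpartial is g t = hpartial is f0 t"
        proof (rule hpartial_local[OF U])
          show "t \<in> - cball 0 (M0 - 1)" using t by simp
          fix x :: "real^'q" assume "x \<in> - cball 0 (M0 - 1)"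
          then show "g x = f0 x" using far by simp
        qed
        moreover have "M0 \<ge> 1" unfolding M0_def using B0 C0 K0 R0 \<delta>pos by (smt (verit) mult_nonneg_nonneg)
        ultimately have "\<bar>hpartial is g t\<bar> \<le> CF is * norm t powr (1 - real k)"
          using CF(2)[of t "is"] t len by simp
        also have "\<dots> \<le> L * norm t powr (1 - real k)"
        proof (rule mult_right_mono)
          have "CF is \<le> (\<Sum>is\<in>Lk. CF is)"
            using Lkfin len CF(1) by (intro member_le_sum) (auto simp: Lk_def)
          then show "CF is \<le> L" unfolding L_def by simp
        qed simp
        finally show "\<bar>hpartial is g t\<bar> \<le> L * norm t powr (1 - real k)" .
        qed
      qed
    qed
  qed
qed

end
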